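(* Let $f:\mathbb{R}^{2}\to\mathbb{R}$ be smooth and normal. Then for all $x,y\in\mathbb{R}$ and all $k_{1}\neq0$, $k_{2}\neq0$, the limits $F(k_{1},y)=\lim_{r\to\infty}\int_{-r}^{r}f(x,y)e^{-ik_{1}x}\,dx$ and $G(x,k_{2})=\lim_{r\to\infty}\int_{-r}^{r}f(x,y)e^{-ik_{2}y}\,dy$ both exist, and $y\mapsto F(k_{1},y)$ and $x\mapsto G(x,k_{2})$ are of moderate decrease (i.e. bounded by $\frac{D}{|y|^{2}}$, resp. $\frac{D}{|x|^{2}}$, for $|y|>1$, resp. $|x|>1$, for some constant $D>0$).
   Context: One-variable notions: a smooth $g:\mathbb{R}\setminus V\to\mathbb{R}$, $V\subset\mathbb{R}$ bounded closed, is analytic at infinity if there exist $\epsilon_{1},\epsilon_{2}>0$ such that $g(1/t)=\sum_{n\geq1}a_{n}t^{n}$ for $0<t<\epsilon_{1}$ and $g(1/t)=\sum_{n\geq1}b_{n}t^{n}$ for $-\epsilon_{2}<t<0$, with real coefficients and both power series absolutely convergent on the respective intervals. Two-variable notions: let $f:\mathbb{R}^{2}\setminus W\to\mathbb{R}$ be smooth with $W$ closed and bounded (here $W=\emptyset$). $f$ is of very moderate decrease if there is $C>0$ with $|f(x,y)|\leq\frac{C}{|(x,y)|}$ for $|(x,y)|>1$, and of moderate decrease if $|f(x,y)|\leq\frac{C}{|(x,y)|^{2}}$ for $|(x,y)|>1$. For fixed $x$ write $f_{x}(y)=f(x,y)$ and for fixed $y$ write $f_{y}(x)=f(x,y)$.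 $f$ is normal if: (i) for every $x$, $f_{x}$ is analytic at infinity; (ii) for every $y$, $f_{y}$ is analytic at infinity; (iii) $f$ is of very moderate decrease; (iv) $\frac{\partial f}{\partial x}$ and $\frac{\partial f}{\partial y}$ are of moderate decrease; (v) there is a uniform bound on the number of zeros of $f_{x},(f_{x})',(f_{x})''$ and of $f_{y},(f_{y})',(f_{y})''$. *)

theory Defs
  imports "HOL-Analysis.Analysis"
begin

text \<open>Smoothness (C-infinity) of a function of two real variables, expressed through
  iterated partial derivatives: D i j is the partial derivative of order i in the
  first and j in the second variable; all of them exist and are continuous.\<close>
definition smooth2 :: "(real \<Rightarrow> real \<Rightarrow> real) \<Rightarrow> bool" where
  "smooth2 f \<longleftrightarrow> (\<exists>D :: nat \<Rightarrow> nat \<Rightarrow> real \<Rightarrow> real \<Rightarrow> real.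
      D 0 0 = f \<and>
      (\<forall>i j. continuous_on UNIV (\<lambda>p. D i j (fst p) (snd p)) \<and>
        (\<forall>x y. ((\<lambda>t. D i j t y) has_real_derivative D (Suc i) j x y) (at x) \<and>
               ((\<lambda>t. D i j x t) has_real_derivative D i (Suc j) x y) (at y))))"

definition analytic_at_infinity :: "(real \<Rightarrow> real) \<Rightarrow> bool" where
  "analytic_at_infinity g \<longleftrightarrow> (\<exists>e1 e2 :: real. \<exists>a b :: nat \<Rightarrow> real. e1 > 0 \<and> e2 > 0 \<and>
      (\<forall>t. 0 < t \<and> t < e1 \<longrightarrow>
         summable (\<lambda>n. \<bar>a n * t ^ (n + 1)\<bar>) \<and> (\<lambda>n. a n * t ^ (n + 1)) sums g (1 / t)) \<and>
      (\<forall>t. - e2 < t \<and> t < 0 \<longrightarrow>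
         summable (\<lambda>n. \<bar>b n * t ^ (n + 1)\<bar>) \<and> (\<lambda>n. b n * t ^ (n + 1)) sums g (1 / t)))"

definition very_moderate_decrease :: "(real \<Rightarrow> real \<Rightarrow> real) \<Rightarrow> bool" where
  "very_moderate_decrease f \<longleftrightarrow> (\<exists>C>0. \<forall>x y. norm (x, y) > 1 \<longrightarrow> \<bar>f x y\<bar> \<le> C / norm (x, y))"

definition moderate_decrease :: "(real \<Rightarrow> real \<Rightarrow> real) \<Rightarrow> bool" where
  "moderate_decrease f \<longleftrightarrow> (\<exists>C>0. \<forall>x y. norm (x, y) > 1 \<longrightarrow> \<bar>f x y\<bar> \<le> C / norm (x, y) ^ 2)"

definition partial_x :: "(real \<Rightarrow> real \<Rightarrow> real) \<Rightarrow> real \<Rightarrow> real \<Rightarrow> real" where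
  "partial_x f x y = deriv (\<lambda>t. f t y) x"

definition partial_y :: "(real \<Rightarrow> real \<Rightarrow> real) \<Rightarrow> real \<Rightarrow> real \<Rightarrow> real" where
  "partial_y f x y = deriv (\<lambda>t. f x t) y"

definition zeros_bounded :: "nat \<Rightarrow> (real \<Rightarrow> real) \<Rightarrow> bool" where
  "zeros_bounded N g \<longleftrightarrow>
     finite {t. g t = 0} \<and> card {t. g t = 0} \<le> N \<and>
     finite {t. deriv g t = 0} \<and> card {t. deriv g t = 0} \<le> N \<and>
     finite {t. deriv (deriv g) t = 0} \<and> card {t. deriv (deriv g) t = 0} \<le> N"

definition normal :: "(real \<Rightarrow> real \<Rightarrow> real) \<Rightarrow> bool" where
  "normal f \<longleftrightarrow>
     (\<forall>x. analytic_at_infinity (\<lambda>y. f x y)) \<and>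
     (\<forall>y. analytic_at_infinity (\<lambda>x. f x y)) \<and>
     very_moderate_decrease f \<and>
     moderate_decrease (partial_x f) \<and> moderate_decrease (partial_y f) \<and>
     (\<exists>N. (\<forall>x. zeros_bounded N (\<lambda>y. f x y)) \<and> (\<forall>y. zeros_bounded N (\<lambda>x. f x y)))"

end

theory Submission
  imports Defs
begin

definition ee :: "real \<Rightarrow> real \<Rightarrow> complex" where
  "ee k x = exp (- \<i> * complex_of_real (k * x))"

lemma ee_deriv: "(ee k has_vector_derivative (- \<i> * of_real k * ee k x)) (at x within S)"
proof -
  have "((\<lambda>z. exp (- \<i> * (of_real k * z))) has_field_derivative
          exp (- \<i> * (of_real k * of_real x)) * (- \<i> * of_real k)) (at (of_real x))"
    by (auto intro!: derivative_eq_intros)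
  from has_vector_derivative_real_field[OF this, where s=S]
  show ?thesis unfolding ee_def by (simp add: mult_ac)
qed

lemma ee_cont: "continuous_on S (ee k)"
  unfolding ee_def by (intro continuous_intros)

lemma norm_ee [simp]: "norm (ee k x) = 1"
  unfolding ee_def by (simp add: norm_exp_i_times[of "- (k*x)", simplified] )

lemma ibp:
  fixes h h' :: "real \<Rightarrow> real"
  assumes k: "k \<noteq> 0" and dh: "\<And>x. (h has_real_derivative h' x) (at x)"
    and ch': "continuous_on UNIV h'" and ab: "a \<le> b"
  shows "integral {a..b} (\<lambda>x. of_real (h x) * ee k x) =
     of_real (h b) * (\<i> / of_real k * ee k b) - of_real (h a) * (\<i> / of_real k * ee k a)
     - (\<i> / of_real k) * integral {a..b} (\<lambda>x. of_real (h' x) * ee k x)"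
proof -
  define P where "P x = of_real (h x) * (\<i> / of_real k * ee k x)" for x
  have ch: "continuous_on UNIV h"
    using dh by (meson DERIV_continuous continuous_at_imp_continuous_on)
  have dP: "(P has_vector_derivative
      (of_real (h x) * (\<i> / of_real k * (- \<i> * of_real k * ee k x)) + of_real (h' x) * (\<i> / of_real k * ee k x)))
      (at x within {a..b})" for x
    unfolding P_def
    apply (intro has_vector_derivative_mult has_vector_derivative_mult_right ee_deriv)
    apply (rule has_vector_derivative_of_real)
    using dh has_field_derivative_at_within by blast
  have eq: "of_real (h x) * (\<i> / of_real k * (- \<i> * of_real k * ee k x)) + of_real (h' x) * (\<i> / of_real k * ee k x)
     = of_real (h x) * ee k x + (\<i> / of_real k) * (of_real (h' x) * ee k x)" for x
    using k by (simp add: field_simps)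
  have FTC: "((\<lambda>x. of_real (h x) * ee k x + (\<i> / of_real k) * (of_real (h' x) * ee k x)) has_integral (P b - P a)) {a..b}"
    using fundamental_theorem_of_calculus[OF ab dP] unfolding eq .
  have i1: "(\<lambda>x. of_real (h x) * ee k x) integrable_on {a..b}"
    by (intro integrable_continuous_interval continuous_intros ee_cont continuous_on_subset[OF ch]) auto
  have i2: "(\<lambda>x. of_real (h' x) * ee k x) integrable_on {a..b}"
    by (intro integrable_continuous_interval continuous_intros ee_cont continuous_on_subset[OF ch']) auto
  have "P b - P a = integral {a..b} (\<lambda>x. of_real (h x) * ee k x + (\<i> / of_real k) * (of_real (h' x) * ee k x))"
    using FTC by (simp add: integral_unique)
  also have "\<dots> = integral {a..b} (\<lambda>x. of_real (h x) * ee k x) + (\<i> / of_real k) * integral {a..b} (\<lambda>x. of_real (h' x) * ee k x)"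
    by (simp only: integral_add[OF i1 integrable_on_mult_right[OF i2]] integral_mult_right)
  finally show ?thesis unfolding P_def by (simp add: algebra_simps)
qed

lemma sign_const:
  fixes g2 :: "real \<Rightarrow> real"
  assumes cg2: "continuous_on UNIV g2" and nz: "\<And>z. a < z \<Longrightarrow> z < b \<Longrightarrow> g2 z \<noteq> 0"
  shows "(\<forall>x\<in>{a..b}. g2 x \<ge> 0) \<or> (\<forall>x\<in>{a..b}. g2 x \<le> 0)"
proof (rule ccontr)
  assume "\<not> ?thesis"
  then obtain p q where p: "p \<in> {a..b}" "g2 p < 0" and q: "q \<in> {a..b}" "g2 q > 0"
    by force
  have c: "continuous_on {u..v} g2" for u v using cg2 continuous_on_subset by blast
  show False
  proof (cases "p \<le> q")
    case True
    from IVT'[of g2 p 0 q, OF _ _ True c] p q obtain z where z: "p \<le> z" "z \<le> q" "g2 z = 0" by auto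
    then have "z \<noteq> p" "z \<noteq> q" using p q by auto
    then show False using nz[of z] z p q by auto
  next
    case False
    from IVT2'[of g2 p 0 q, OF _ _ _ c] False p q obtain z where z: "q \<le> z" "z \<le> p" "g2 z = 0" by auto
    then have "z \<noteq> p" "z \<noteq> q" using p q by auto
    then show False using nz[of z] z p q by auto
  qed
qed

lemma bv_piece:
  fixes g1 g2 :: "real \<Rightarrow> real"
  assumes dg1: "\<And>x. (g1 has_real_derivative g2 x) (at x)" and cg2: "continuous_on UNIV g2"
    and nz: "\<And>z. a < z \<Longrightarrow> z < b \<Longrightarrow> g2 z \<noteq> 0" and ab: "a \<le> b"
    and B: "\<And>x. x \<in> {a..b} \<Longrightarrow> \<bar>g1 x\<bar> \<le> B"
  shows "integral {a..b} (\<lambda>x. \<bar>g2 x\<bar>) \<le> 2 * B"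
proof -
  have FTC: "(g2 has_integral (g1 b - g1 a)) {a..b}"
    apply (rule fundamental_theorem_of_calculus[OF ab])
    using dg1 has_field_derivative_at_within has_real_derivative_iff_has_vector_derivative by blast
  have "\<bar>g1 b - g1 a\<bar> \<le> 2 * B" using B[of a] B[of b] ab by auto
  moreover
  from sign_const[OF cg2 nz] have "integral {a..b} (\<lambda>x. \<bar>g2 x\<bar>) = \<bar>g1 b - g1 a\<bar>"
  proof
    assume "\<forall>x\<in>{a..b}. g2 x \<ge> 0"
    then have "integral {a..b} (\<lambda>x. \<bar>g2 x\<bar>) = integral {a..b} g2"
      by (intro integral_cong) auto
    also have "\<dots> = g1 b - g1 a" using FTC by blast
    finally show ?thesis using \<open>\<forall>x\<in>{a..b}. g2 x \<ge> 0\<close> FTC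
      by (metis abs_of_nonneg has_integral_nonneg)
  next
    assume "\<forall>x\<in>{a..b}. g2 x \<le> 0"
    then have "integral {a..b} (\<lambda>x. \<bar>g2 x\<bar>) = integral {a..b} (\<lambda>x. - g2 x)"
      by (intro integral_cong) auto
    also have "\<dots> = - (g1 b - g1 a)" using FTC by (simp add: integral_neg integral_unique)
    finally have eq: "integral {a..b} (\<lambda>x. \<bar>g2 x\<bar>) = - (g1 b - g1 a)" .
    have "((\<lambda>x. - g2 x) has_integral - (g1 b - g1 a)) {a..b}" using has_integral_neg[OF FTC] .
    then have "- (g1 b - g1 a) \<ge> 0" using \<open>\<forall>x\<in>{a..b}. g2 x \<le> 0\<close>
      by (metis has_integral_nonneg neg_0_le_iff_le)
    then show ?thesis using eq by simp
  qed
  ultimately show ?thesis by simp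
qed

lemma bv:
  fixes g1 g2 :: "real \<Rightarrow> real"
  assumes dg1: "\<And>x. (g1 has_real_derivative g2 x) (at x)" and cg2: "continuous_on UNIV g2"
    and fin: "finite {t. g2 t = 0}"
  shows "a \<le> b \<Longrightarrow> (\<And>x. x \<in> {a..b} \<Longrightarrow> \<bar>g1 x\<bar> \<le> B) \<Longrightarrow>
    integral {a..b} (\<lambda>x. \<bar>g2 x\<bar>) \<le> 2 * B * (card ({t. g2 t = 0} \<inter> {a<..<b}) + 1)"
proof (induction "card ({t. g2 t = 0} \<inter> {a<..<b})" arbitrary: a b rule: less_induct)
  case less
  define Z where "Z = {t. g2 t = 0}"
  have B0: "B \<ge> 0" using less.prems(2)[of a] less.prems(1) by auto
  show ?case
  proof (cases "Z \<inter> {a<..<b} = {}")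
    case True
    have "integral {a..b} (\<lambda>x. \<bar>g2 x\<bar>) \<le> 2 * B"
      by (rule bv_piece[OF dg1 cg2 _ less.prems]) (use True Z_def in auto)
    then show ?thesis using B0 True by (simp add: Z_def[symmetric])
  next
    case False
    then obtain z where z: "z \<in> Z" "a < z" "z < b" by auto
    have finZ: "finite Z" using fin Z_def by simp
    let ?A = "Z \<inter> {a<..<z}" and ?C = "Z \<inter> {z<..<b}"
    have sub: "?A \<union> ?C \<union> {z} \<subseteq> Z \<inter> {a<..<b}" using z by auto
    have disj: "?A \<inter> ?C = {}" "(?A \<union> ?C) \<inter> {z} = {}" by auto
    have fins: "finite ?A" "finite ?C" using finZ by auto
    have cardsum: "card ?A + card ?C + 1 \<le> card (Z \<inter> {a<..<b})"
    proof -
      have "card (?A \<union> ?C \<union> {z}) = card ?A + card ?C + 1"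
        using disj fins by (simp add: card_Un_disjoint)
      moreover have "card (?A \<union> ?C \<union> {z}) \<le> card (Z \<inter> {a<..<b})"
        using sub finZ by (intro card_mono) auto
      ultimately show ?thesis by simp
    qed
    have IA: "integral {a..z} (\<lambda>x. \<bar>g2 x\<bar>) \<le> 2 * B * (card ?A + 1)"
      using less.hyps[of a z] cardsum less.prems z by (auto simp: Z_def)
    have IC: "integral {z..b} (\<lambda>x. \<bar>g2 x\<bar>) \<le> 2 * B * (card ?C + 1)"
      using less.hyps[of z b] cardsum less.prems z by (auto simp: Z_def)
    have int: "(\<lambda>x. \<bar>g2 x\<bar>) integrable_on {a..b}"
      by (intro integrable_continuous_interval continuous_intros continuous_on_subset[OF cg2]) auto
    have "integral {a..b} (\<lambda>x. \<bar>g2 x\<bar>) = integral {a..z} (\<lambda>x. \<bar>g2 x\<bar>) + integral {z..b} (\<lambda>x. \<bar>g2 x\<bar>)"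
      using Henstock_Kurzweil_Integration.integral_combine[OF _ _ int, of z] z by simp
    also have "\<dots> \<le> 2 * B * (card ?A + 1) + 2 * B * (card ?C + 1)" using IA IC by simp
    also have "\<dots> = 2 * B * (card ?A + card ?C + 1 + 1)" by (simp add: algebra_simps)
    also have "\<dots> \<le> 2 * B * (card (Z \<inter> {a<..<b}) + 1)"
      using cardsum B0 by (intro mult_left_mono) auto
    finally show ?thesis by (simp add: Z_def)
  qed
qed

lemma cauchy_real_at_top:
  fixes h :: "real \<Rightarrow> 'a::banach"
  assumes Q: "Q > 0" and M: "M \<ge> 0"
    and H: "\<And>r s. Q \<le> r \<Longrightarrow> r \<le> s \<Longrightarrow> norm (h s - h r) \<le> M / r"
  shows "\<exists>L. (h \<longlongrightarrow> L) at_top"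
proof -
  define X where "X n = h (Q + real n)" for n
  have HX: "norm (X m - X n) \<le> M / (Q + real n)" if "n \<le> m" for m n
    unfolding X_def using H[of "Q + real n" "Q + real m"] that Q by auto
  have "Cauchy X"
  proof (rule CauchyI)
    fix e :: real assume e: "e > 0"
    define K where "K = nat \<lceil>M / e\<rceil>"
    have K: "M / (Q + real K) < e"
    proof -
      have "M / e \<le> real K" unfolding K_def by linarith
      then have "M \<le> e * real K" using e by (simp add: field_simps)
      moreover have "0 < Q * e" using e Q by simp
      ultimately have "M < e * (Q + real K)" by (simp add: algebra_simps)
      then show ?thesis using Q by (simp add: divide_less_eq)
    qed
    show "\<exists>K. \<forall>m\<ge>K. \<forall>n\<ge>K. norm (X m - X n) < e"
    proof (intro exI allI impI)
      fix m n assume mn: "K \<le> m" "K \<le> n"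
      have mono: "M / (Q + real j) \<le> M / (Q + real K)" if "K \<le> j" for j
        using that M Q by (intro divide_left_mono) auto
      show "norm (X m - X n) < e"
      proof (cases "n \<le> m")
        case True
        then show ?thesis using HX[OF True] mono[OF mn(2)] K by linarith
      next
        case False
        then have "m \<le> n" by simp
        from HX[OF this] mono[OF mn(1)] K have "norm (X n - X m) < e" by linarith
        then show ?thesis by (simp add: norm_minus_commute)
      qed
    qed
  qed
  then obtain L where L: "X \<longlonglongrightarrow> L" using Cauchy_convergent_iff convergent_def by blast
  have bound: "norm (h r - L) \<le> M / r" if r: "r \<ge> Q" for r
  proof -
    have t: "(\<lambda>n. norm (X n - h r)) \<longlonglongrightarrow> norm (L - h r)"
      by (intro tendsto_intros L)
    have ev: "eventually (\<lambda>n. norm (X n - h r) \<le> M / r) sequentially"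
    proof -
      obtain n0 :: nat where "r \<le> real n0" using real_arch_simple by blast
      then show ?thesis unfolding eventually_sequentially X_def
        using H[OF r] Q by (intro exI[of _ n0]) auto
    qed
    have "norm (L - h r) \<le> M / r" by (rule tendsto_upperbound[OF t ev]) simp
    then show ?thesis by (simp add: norm_minus_commute)
  qed
  have "((\<lambda>r. M / r) \<longlongrightarrow> 0) at_top"
    by (intro tendsto_divide_0[OF tendsto_const] filterlim_at_top_imp_at_infinity filterlim_ident)
  then have "((\<lambda>r. h r - L) \<longlongrightarrow> 0) at_top"
  proof (rule tendsto_0_le[where K=1])
    show "\<forall>\<^sub>F x in at_top. norm (h x - L) \<le> norm (M / x) * 1"
      using eventually_ge_at_top[of Q]
    proof eventually_elim
      case (elim x) then show ?case using bound[of x] Q M by simp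
    qed
  qed
  then show ?thesis using LIM_zero_cancel by blast
qed

lemma bd_lim:
  fixes h :: "real \<Rightarrow> real"
  assumes k: "k \<noteq> 0" and Ch: "Ch \<ge> 0" and hb: "\<And>x. \<bar>x\<bar> \<ge> 2 \<Longrightarrow> \<bar>h x\<bar> \<le> Ch / \<bar>x\<bar>"
  shows "((\<lambda>r. of_real (h r) * (\<i> / of_real k * ee k r) - of_real (h (-r)) * (\<i> / of_real k * ee k (-r)))
          \<longlongrightarrow> 0) at_top"
proof -
  have "((\<lambda>r. 1 / r :: real) \<longlongrightarrow> 0) at_top"
    by (intro tendsto_divide_0[OF tendsto_const] filterlim_at_top_imp_at_infinity filterlim_ident)
  then show ?thesis
  proof (rule tendsto_0_le[where K="2 * Ch / \<bar>k\<bar>"])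
    show "\<forall>\<^sub>F x in at_top. norm (of_real (h x) * (\<i> / of_real k * ee k x) - of_real (h (-x)) * (\<i> / of_real k * ee k (-x)))
          \<le> norm (1 / x) * (2 * Ch / \<bar>k\<bar>)"
      using eventually_ge_at_top[of 2]
    proof eventually_elim
      case (elim r)
      have n1: "norm (of_real (h y) * (\<i> / of_real k * ee k z)) = \<bar>h y\<bar> / \<bar>k\<bar>" for y z
        by (simp add: norm_mult norm_divide)
      have "norm (of_real (h r) * (\<i> / of_real k * ee k r) - of_real (h (-r)) * (\<i> / of_real k * ee k (-r)))
          \<le> \<bar>h r\<bar> / \<bar>k\<bar> + \<bar>h (-r)\<bar> / \<bar>k\<bar>"
        using norm_triangle_ineq4 n1 by metis
      also have "\<dots> \<le> Ch / r / \<bar>k\<bar> + Ch / r / \<bar>k\<bar>"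
        using hb[of r] hb[of "-r"] elim k by (intro add_mono divide_right_mono) auto
      also have "\<dots> = norm (1 / r) * (2 * Ch / \<bar>k\<bar>)" using elim by simp
      finally show ?case .
    qed
  qed
qed

lemma core:
  fixes g g1 g2 :: "real \<Rightarrow> real" and k C0 C1 :: real and N :: nat
  assumes k: "k \<noteq> 0"
    and dg: "\<And>x. (g has_real_derivative g1 x) (at x)"
    and dg1: "\<And>x. (g1 has_real_derivative g2 x) (at x)"
    and cg2: "continuous_on UNIV g2"
    and fin: "finite {t. g2 t = 0}" and cardN: "card {t. g2 t = 0} \<le> N"
    and C0: "C0 \<ge> 0" "\<And>x. \<bar>x\<bar> \<ge> 2 \<Longrightarrow> \<bar>g x\<bar> \<le> C0 / \<bar>x\<bar>"
    and C1: "C1 \<ge> 0" "\<And>x. \<bar>x\<bar> \<ge> 2 \<Longrightarrow> \<bar>g1 x\<bar> \<le> C1 / x\<^sup>2"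
  shows "\<exists>L. ((\<lambda>r. integral {-r..r} (\<lambda>x. of_real (g x) * ee k x)) \<longlongrightarrow> L) at_top \<and>
            (\<forall>B. (\<forall>x. \<bar>g1 x\<bar> \<le> B) \<longrightarrow> norm L \<le> 2 * B * (N + 1) / k\<^sup>2)"
proof -
  have cg1: "continuous_on UNIV g1"
    using dg1 by (meson DERIV_continuous continuous_at_imp_continuous_on)
  define c where "c = \<i> / of_real k"
  define K where "K r = integral {-r..r} (\<lambda>x. of_real (g2 x) * ee k x)" for r
  define bd where "bd h r = of_real (h r) * (c * ee k r) - of_real (h (-r)) * (c * ee k (-r))" for h :: "real \<Rightarrow> real" and r
  have eqI: "integral {-r..r} (\<lambda>x. of_real (g x) * ee k x) = bd g r - c * (bd g1 r - c * K r)"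
    if "r \<ge> 0" for r
    using ibp[OF k dg cg1, of "-r" r] ibp[OF k dg1 cg2, of "-r" r] that
    unfolding bd_def K_def c_def by simp
  have int2: "(\<lambda>x. of_real (g2 x) * ee k x) integrable_on {a..b}" for a b
    by (intro integrable_continuous_interval continuous_intros ee_cont continuous_on_subset[OF cg2]) auto
  have normK: "norm (integral {a..b} (\<lambda>x. of_real (g2 x) * ee k x)) \<le> 2 * B * (N + 1)"
    if ab: "a \<le> b" and B: "\<And>x. x \<in> {a..b} \<Longrightarrow> \<bar>g1 x\<bar> \<le> B" for a b B
  proof -
    have B0: "B \<ge> 0" using B[of a] ab by auto
    have "norm (integral {a..b} (\<lambda>x. of_real (g2 x) * ee k x)) \<le> integral {a..b} (\<lambda>x. \<bar>g2 x\<bar>)"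
      by (rule integral_norm_bound_integral[OF int2])
         (auto intro!: integrable_continuous_interval continuous_intros continuous_on_subset[OF cg2] simp: norm_mult)
    also have "\<dots> \<le> 2 * B * (card ({t. g2 t = 0} \<inter> {a<..<b}) + 1)"
      by (rule bv[OF dg1 cg2 fin ab B])
    also have "\<dots> \<le> 2 * B * (N + 1)"
    proof -
      have "card ({t. g2 t = 0} \<inter> {a<..<b}) \<le> card {t. g2 t = 0}"
        using fin by (intro card_mono) auto
      then show ?thesis using cardN B0 by (intro mult_left_mono) auto
    qed
    finally show ?thesis .
  qed
  have "\<exists>L0. (K \<longlongrightarrow> L0) at_top"
  proof (rule cauchy_real_at_top[where Q=2 and M="4 * C1 * (N + 1)"])
    fix r s :: real assume rs: "2 \<le> r" "r \<le> s"
    have Bx: "\<bar>g1 x\<bar> \<le> C1 / r\<^sup>2" if "r \<le> \<bar>x\<bar>" for x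
    proof -
      have "\<bar>g1 x\<bar> \<le> C1 / x\<^sup>2" using C1(2)[of x] that rs by auto
      also have "\<dots> \<le> C1 / r\<^sup>2"
      proof -
        have "r\<^sup>2 \<le> \<bar>x\<bar>\<^sup>2" using that rs by (intro power_mono) auto
        then have "r\<^sup>2 \<le> x\<^sup>2" by simp
        moreover have "0 < x\<^sup>2 * r\<^sup>2" using that rs by auto
        ultimately show ?thesis using C1(1) by (intro divide_left_mono) auto
      qed
      finally show ?thesis .
    qed
    have c1: "integral {-s..s} (\<lambda>x. of_real (g2 x) * ee k x) = integral {-s..-r} (\<lambda>x. of_real (g2 x) * ee k x) + integral {-r..s} (\<lambda>x. of_real (g2 x) * ee k x)"
      using Henstock_Kurzweil_Integration.integral_combine[OF _ _ int2, of "-s" "-r" s] rs by simp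
    have c2: "integral {-r..s} (\<lambda>x. of_real (g2 x) * ee k x) = integral {-r..r} (\<lambda>x. of_real (g2 x) * ee k x) + integral {r..s} (\<lambda>x. of_real (g2 x) * ee k x)"
      using Henstock_Kurzweil_Integration.integral_combine[OF _ _ int2, of "-r" r s] rs by simp
    let ?A = "integral {-s..-r} (\<lambda>x. of_real (g2 x) * ee k x)"
    let ?C = "integral {r..s} (\<lambda>x. of_real (g2 x) * ee k x)"
    have KA: "K s - K r = ?A + ?C"
      unfolding K_def using c1 c2 by simp
    have nA: "norm ?A \<le> 2 * (C1 / r\<^sup>2) * (N + 1)"
      by (rule normK) (use rs Bx in auto)
    have nC: "norm ?C \<le> 2 * (C1 / r\<^sup>2) * (N + 1)"
      by (rule normK) (use rs Bx in auto)
    have "norm (K s - K r) \<le> 2 * (C1 / r\<^sup>2) * (N + 1) + 2 * (C1 / r\<^sup>2) * (N + 1)"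
      unfolding KA using norm_triangle_ineq[of ?A ?C] nA nC by linarith
    also have "\<dots> \<le> 4 * C1 * (N + 1) / r"
    proof -
      have "C1 / r\<^sup>2 \<le> C1 / r" using rs C1(1)
        by (intro divide_left_mono) (auto simp: power2_eq_square)
      then have "4 * (C1 / r\<^sup>2) * (N + 1) \<le> 4 * (C1 / r) * (N + 1)" by (intro mult_right_mono) auto
      then show ?thesis by simp
    qed
    finally show "norm (K s - K r) \<le> 4 * C1 * (N + 1) / r" .
  qed (use C1 in auto)
  then obtain L0 where L0: "(K \<longlongrightarrow> L0) at_top" by blast
  have lim0: "(bd g \<longlongrightarrow> 0) at_top"
    unfolding bd_def c_def by (rule bd_lim[OF k C0])
  have lim1: "(bd g1 \<longlongrightarrow> 0) at_top"
    unfolding bd_def c_def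
  proof (rule bd_lim[OF k C1(1)])
    fix x :: real assume x: "\<bar>x\<bar> \<ge> 2"
    have "\<bar>g1 x\<bar> \<le> C1 / x\<^sup>2" using C1(2)[OF x] .
    also have "\<dots> \<le> C1 / \<bar>x\<bar>"
    proof -
      have "\<bar>x\<bar> * 1 \<le> \<bar>x\<bar> * \<bar>x\<bar>" using x by (intro mult_left_mono) auto
      then have "\<bar>x\<bar> \<le> x\<^sup>2" by (simp add: power2_eq_square)
      moreover have "0 < x\<^sup>2 * \<bar>x\<bar>" using x by auto
      ultimately show ?thesis using C1(1) by (intro divide_left_mono) auto
    qed
    finally show "\<bar>g1 x\<bar> \<le> C1 / \<bar>x\<bar>" .
  qed
  have limI: "((\<lambda>r. bd g r - c * (bd g1 r - c * K r)) \<longlongrightarrow> 0 - c * (0 - c * L0)) at_top"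
    by (intro tendsto_intros lim0 lim1 L0)
  have "((\<lambda>r. integral {-r..r} (\<lambda>x. of_real (g x) * ee k x)) \<longlongrightarrow> c * c * L0) at_top"
  proof (rule Lim_transform_eventually)
    show "((\<lambda>r. bd g r - c * (bd g1 r - c * K r)) \<longlongrightarrow> c * c * L0) at_top"
      using limI by (simp add: mult.assoc)
    show "\<forall>\<^sub>F r in at_top. bd g r - c * (bd g1 r - c * K r) = integral {-r..r} (\<lambda>x. of_real (g x) * ee k x)"
      using eventually_ge_at_top[of 0] by eventually_elim (simp add: eqI)
  qed
  moreover have "norm (c * c * L0) \<le> 2 * B * (N + 1) / k\<^sup>2" if B: "\<forall>x. \<bar>g1 x\<bar> \<le> B" for B
  proof -
    have t: "((\<lambda>r. norm (K r)) \<longlongrightarrow> norm L0) at_top" by (intro tendsto_intros L0)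
    have "norm L0 \<le> 2 * B * (N + 1)"
    proof (rule tendsto_upperbound[OF t])
      show "\<forall>\<^sub>F r in at_top. norm (K r) \<le> 2 * B * (N + 1)"
        using eventually_ge_at_top[of 0]
      proof eventually_elim
        case (elim r)
        show ?case unfolding K_def by (rule normK) (use B elim in auto)
      qed
    qed simp
    moreover have "norm (c * c * L0) = norm L0 / k\<^sup>2"
      unfolding c_def by (simp add: norm_mult norm_divide power2_eq_square)
    ultimately show ?thesis using k by (simp add: divide_right_mono)
  qed
  ultimately show ?thesis by blast
qed

lemma half:
  fixes f :: "real \<Rightarrow> real \<Rightarrow> real"
  assumes sm: "smooth2 f" and vm: "very_moderate_decrease f" and md: "moderate_decrease (partial_x f)"
    and zb: "\<forall>y. zeros_bounded N (\<lambda>x. f x y)"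
  shows "\<forall>k1::real. k1 \<noteq> 0 \<longrightarrow>
           (\<exists>F :: real \<Rightarrow> complex.
              (\<forall>y. ((\<lambda>r. integral {-r..r}
                        (\<lambda>x. complex_of_real (f x y) * exp (- \<i> * complex_of_real (k1 * x))))
                     \<longlongrightarrow> F y) at_top) \<and>
              (\<exists>D>0. \<forall>y. \<bar>y\<bar> > 1 \<longrightarrow> norm (F y) \<le> D / \<bar>y\<bar> ^ 2))"
proof (intro allI impI)
  fix k :: real assume k: "k \<noteq> 0"
  from sm obtain D where D0: "D 0 0 = f" and DD: "\<forall>i j. continuous_on UNIV (\<lambda>p. D i j (fst p) (snd p)) \<and>
        (\<forall>x y. ((\<lambda>t. D i j t y) has_real_derivative D (Suc i) j x y) (at x) \<and>
               ((\<lambda>t. D i j x t) has_real_derivative D i (Suc j) x y) (at y))"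
    unfolding smooth2_def by blast
  have Dc: "\<And>i j. continuous_on UNIV (\<lambda>p. D i j (fst p) (snd p))" using DD by blast
  have Dx: "\<And>i j x y. ((\<lambda>t. D i j t y) has_real_derivative D (Suc i) j x y) (at x)" using DD by blast
  from vm obtain C0 where C0: "C0 > 0" "\<And>x y. norm (x, y) > 1 \<Longrightarrow> \<bar>f x y\<bar> \<le> C0 / norm (x, y)"
    unfolding very_moderate_decrease_def by blast
  have px: "partial_x f x y = D 1 0 x y" for x y
    unfolding partial_x_def using Dx[of 0 0 y x] D0 by (simp add: DERIV_imp_deriv)
  from md obtain C1 where C1: "C1 > 0" "\<And>x y. norm (x, y) > 1 \<Longrightarrow> \<bar>D 1 0 x y\<bar> \<le> C1 / norm (x, y) ^ 2"
    unfolding moderate_decrease_def px by blast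
  have nx: "\<bar>x\<bar> \<le> norm (x, y)" for x y :: real
    using norm_fst_le[of x y] by simp
  have ny: "\<bar>y\<bar> \<le> norm (x, y)" for x y :: real
    using norm_snd_le[of y x] by simp
  define P where "P y L \<longleftrightarrow> ((\<lambda>r. integral {-r..r} (\<lambda>x. of_real (f x y) * ee k x)) \<longlongrightarrow> L) at_top \<and>
            (\<forall>B. (\<forall>x. \<bar>D 1 0 x y\<bar> \<le> B) \<longrightarrow> norm L \<le> 2 * B * (N + 1) / k\<^sup>2)" for y L
  have "\<exists>L. P y L" for y
  proof -
    have dg: "((\<lambda>x. f x y) has_real_derivative D 1 0 x y) (at x)" for x
      using Dx[of 0 0 y x] D0 by simp
    have dg1: "((\<lambda>x. D 1 0 x y) has_real_derivative D 2 0 x y) (at x)" for x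
      using Dx[of 1 0 y x] by (simp add: numeral_2_eq_2)
    have cg2: "continuous_on UNIV (\<lambda>x. D 2 0 x y)"
    proof -
      have "continuous_on UNIV (\<lambda>x::real. (x, y))" by (intro continuous_intros)
      from continuous_on_compose2[OF Dc[of 2 0] this] show ?thesis by simp
    qed
    have d1: "deriv (\<lambda>x. f x y) = (\<lambda>x. D 1 0 x y)"
      using dg by (auto intro!: ext DERIV_imp_deriv)
    have d2: "deriv (\<lambda>x. D 1 0 x y) = (\<lambda>x. D 2 0 x y)"
      using dg1 by (auto intro!: ext DERIV_imp_deriv)
    have zby: "zeros_bounded N (\<lambda>x. f x y)" using zb by blast
    then have fin: "finite {t. D 2 0 t y = 0}" and cardN: "card {t. D 2 0 t y = 0} \<le> N"
      unfolding zeros_bounded_def d1 d2 by auto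
    have b0: "\<bar>f x y\<bar> \<le> C0 / \<bar>x\<bar>" if x: "\<bar>x\<bar> \<ge> 2" for x
    proof -
      have "norm (x, y) > 1" using nx[of x y] x by linarith
      then have "\<bar>f x y\<bar> \<le> C0 / norm (x, y)" by (rule C0(2))
      also have "\<dots> \<le> C0 / \<bar>x\<bar>"
      proof -
        have "0 < norm (x, y) * \<bar>x\<bar>" using nx[of x y] x by (intro mult_pos_pos) auto
        then show ?thesis using nx[of x y] C0(1) by (intro divide_left_mono) auto
      qed
      finally show ?thesis .
    qed
    have b1: "\<bar>D 1 0 x y\<bar> \<le> C1 / x\<^sup>2" if x: "\<bar>x\<bar> \<ge> 2" for x
    proof -
      have "norm (x, y) > 1" using nx[of x y] x by linarith
      then have "\<bar>D 1 0 x y\<bar> \<le> C1 / norm (x, y) ^ 2" by (rule C1(2))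
      also have "\<dots> \<le> C1 / x\<^sup>2"
      proof -
        have "\<bar>x\<bar>\<^sup>2 \<le> (norm (x, y))\<^sup>2" using nx[of x y] by (intro power_mono) auto
        moreover have "0 < (norm (x, y))\<^sup>2 * x\<^sup>2"
        proof -
          have "norm (x, y) > 0" using x nx[of x y] by linarith
          then show ?thesis using x by simp
        qed
        ultimately show ?thesis using C1(1) by (intro divide_left_mono) auto
      qed
      finally show ?thesis .
    qed
    from core[OF k dg dg1 cg2 fin cardN _ b0 _ b1] C0 C1 show ?thesis unfolding P_def by auto
  qed
  then obtain F where F: "\<And>y. P y (F y)" by metis
  show "\<exists>F :: real \<Rightarrow> complex.
              (\<forall>y. ((\<lambda>r. integral {-r..r}
                        (\<lambda>x. complex_of_real (f x y) * exp (- \<i> * complex_of_real (k * x))))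
                     \<longlongrightarrow> F y) at_top) \<and>
              (\<exists>D>0. \<forall>y. \<bar>y\<bar> > 1 \<longrightarrow> norm (F y) \<le> D / \<bar>y\<bar> ^ 2)"
  proof (intro exI conjI allI impI)
    fix y show "((\<lambda>r. integral {-r..r}
                        (\<lambda>x. complex_of_real (f x y) * exp (- \<i> * complex_of_real (k * x))))
                     \<longlongrightarrow> F y) at_top"
      using F[of y] unfolding P_def ee_def by simp
  next
    show "2 * C1 * (N + 1) / k\<^sup>2 > 0" using C1 k by simp
  next
    fix y :: real assume y: "\<bar>y\<bar> > 1"
    have "\<forall>x. \<bar>D 1 0 x y\<bar> \<le> C1 / y\<^sup>2"
    proof
      fix x :: real
      have "norm (x, y) > 1" using ny[of y x] y by linarith
      then have "\<bar>D 1 0 x y\<bar> \<le> C1 / norm (x, y) ^ 2" by (rule C1(2))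
      also have "\<dots> \<le> C1 / y\<^sup>2"
      proof -
        have "\<bar>y\<bar>\<^sup>2 \<le> (norm (x, y))\<^sup>2" using ny[of y x] by (intro power_mono) auto
        moreover have "0 < (norm (x, y))\<^sup>2 * y\<^sup>2"
        proof -
          have "norm (x, y) > 0" using y ny[of y x] by linarith
          then show ?thesis using y by simp
        qed
        ultimately show ?thesis using C1(1) by (intro divide_left_mono) auto
      qed
      finally show "\<bar>D 1 0 x y\<bar> \<le> C1 / y\<^sup>2" .
    qed
    then have "norm (F y) \<le> 2 * (C1 / y\<^sup>2) * (N + 1) / k\<^sup>2" using F[of y] unfolding P_def by blast
    also have "\<dots> = 2 * C1 * (N + 1) / k\<^sup>2 / \<bar>y\<bar> ^ 2" by (simp add: field_simps)
    finally show "norm (F y) \<le> 2 * C1 * (N + 1) / k\<^sup>2 / \<bar>y\<bar> ^ 2" .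
  qed
qed

lemma smooth2_swap:
  assumes "smooth2 f" shows "smooth2 (\<lambda>x y. f y x)"
proof -
  from assms obtain D where D0: "D 0 0 = f" and DD: "\<forall>i j. continuous_on UNIV (\<lambda>p. D i j (fst p) (snd p)) \<and>
        (\<forall>x y. ((\<lambda>t. D i j t y) has_real_derivative D (Suc i) j x y) (at x) \<and>
               ((\<lambda>t. D i j x t) has_real_derivative D i (Suc j) x y) (at y))"
    unfolding smooth2_def by blast
  define D' where "D' i j x y = D j i y x" for i j x y
  have "continuous_on UNIV (\<lambda>p. D' i j (fst p) (snd p))" for i j
  proof -
    have "continuous_on UNIV (\<lambda>p::real\<times>real. (snd p, fst p))" by (intro continuous_intros)
    from continuous_on_compose2[OF DD[rule_format, THEN conjunct1, of j i] this]
    show ?thesis unfolding D'_def by simp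
  qed
  moreover have "D' 0 0 = (\<lambda>x y. f y x)" unfolding D'_def D0 by simp
  moreover have "((\<lambda>t. D' i j t y) has_real_derivative D' (Suc i) j x y) (at x) \<and>
               ((\<lambda>t. D' i j x t) has_real_derivative D' i (Suc j) x y) (at y)" for i j x y
    unfolding D'_def using DD by blast
  ultimately show ?thesis unfolding smooth2_def by blast
qed

lemma norm_swap: "norm ((x::real), (y::real)) = norm (y, x)"
  by (simp add: norm_Pair add.commute)

theorem lemma10:
  fixes f :: "real \<Rightarrow> real \<Rightarrow> real"
  assumes "smooth2 f" and "normal f"
  shows "(\<forall>k1::real. k1 \<noteq> 0 \<longrightarrow>
           (\<exists>F :: real \<Rightarrow> complex.
              (\<forall>y. ((\<lambda>r. integral {-r..r}
                        (\<lambda>x. complex_of_real (f x y) * exp (- \<i> * complex_of_real (k1 * x))))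
                     \<longlongrightarrow> F y) at_top) \<and>
              (\<exists>D>0. \<forall>y. \<bar>y\<bar> > 1 \<longrightarrow> norm (F y) \<le> D / \<bar>y\<bar> ^ 2))) \<and>
         (\<forall>k2::real. k2 \<noteq> 0 \<longrightarrow>
           (\<exists>G :: real \<Rightarrow> complex.
              (\<forall>x. ((\<lambda>r. integral {-r..r}
                        (\<lambda>y. complex_of_real (f x y) * exp (- \<i> * complex_of_real (k2 * y))))
                     \<longlongrightarrow> G x) at_top) \<and>
              (\<exists>D>0. \<forall>x. \<bar>x\<bar> > 1 \<longrightarrow> norm (G x) \<le> D / \<bar>x\<bar> ^ 2)))"
proof
  from assms(2) obtain N where zx: "\<forall>x. zeros_bounded N (\<lambda>y. f x y)" and zy: "\<forall>y. zeros_bounded N (\<lambda>x. f x y)"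
    and vm: "very_moderate_decrease f" and mx: "moderate_decrease (partial_x f)"
    and my: "moderate_decrease (partial_y f)"
    unfolding normal_def by blast
  show "\<forall>k1::real. k1 \<noteq> 0 \<longrightarrow>
           (\<exists>F :: real \<Rightarrow> complex.
              (\<forall>y. ((\<lambda>r. integral {-r..r}
                        (\<lambda>x. complex_of_real (f x y) * exp (- \<i> * complex_of_real (k1 * x))))
                     \<longlongrightarrow> F y) at_top) \<and>
              (\<exists>D>0. \<forall>y. \<bar>y\<bar> > 1 \<longrightarrow> norm (F y) \<le> D / \<bar>y\<bar> ^ 2))"
    by (rule half[OF assms(1) vm mx zy])
  have vm': "very_moderate_decrease (\<lambda>x y. f y x)"
    using vm unfolding very_moderate_decrease_def by (metis norm_swap)
  have px: "partial_x (\<lambda>x y. f y x) = (\<lambda>x y. partial_y f y x)"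
    unfolding partial_x_def partial_y_def by simp
  have mx': "moderate_decrease (partial_x (\<lambda>x y. f y x))"
    using my unfolding px moderate_decrease_def by (metis norm_swap)
  have zy': "\<forall>y. zeros_bounded N (\<lambda>x. (\<lambda>x y. f y x) x y)" using zx by simp
  from half[OF smooth2_swap[OF assms(1)] vm' mx' zy']
  show "\<forall>k2::real. k2 \<noteq> 0 \<longrightarrow>
           (\<exists>G :: real \<Rightarrow> complex.
              (\<forall>x. ((\<lambda>r. integral {-r..r}
                        (\<lambda>y. complex_of_real (f x y) * exp (- \<i> * complex_of_real (k2 * y))))
                     \<longlongrightarrow> G x) at_top) \<and>
              (\<exists>D>0. \<forall>x. \<bar>x\<bar> > 1 \<longrightarrow> norm (G x) \<le> D / \<bar>x\<bar> ^ 2))" by simp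
qed

end
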